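(* Let $d\ge1$ and $1\le p<q<\infty$. Then the local Morrey space $\mathrm{L}\mathcal{M}^p_q(\mathbb{R}^d)$ satisfies $$C_{\rm NJ}(\mathrm{L}\mathcal{M}^p_q)=C_{\rm J}(\mathrm{L}\mathcal{M}^p_q)=2\quad\text{and}\quad C_{\rm DW}(\mathrm{L}\mathcal{M}^p_q)=4.$$
   Context: For $1\le p\le q<\infty$, the local Morrey space $\mathrm{L}\mathcal{M}^p_q=\mathrm{L}\mathcal{M}^p_q(\mathbb{R}^d)$ is the Banach space of all measurable functions $f$ on $\mathbb{R}^d$ with $$\|f\|_{\mathrm{L}\mathcal{M}^p_q}:=\sup_{r>0}|B(0,r)|^{\frac1q-\frac1p}\Big(\int_{B(0,r)}|f(y)|^p\,dy\Big)^{1/p}<\infty,$$ where $B(0,r)$ is the Euclidean ball of radius $r$ centered at the origin and $|B(0,r)|$ its Lebesgue measure. For a Banach space $X$: the von Neumann–Jordan constant is $C_{\rm NJ}(X):=\sup\Big\{\frac{\|x+y\|_X^2+\|x-y\|_X^2}{2(\|x\|_X^2+\|y\|_X^2)}: x,y\in X\setminus\{0\}\Big\}$; the James constant is $C_{\rm J}(X):=\sup\{\min\{\|x+y\|_X,\|x-y\|_X\}: x,y\in X,\ \|x\|_X=\|y\|_X=1\}$; the Dunkl–Williams constant is $C_{\rm DW}(X):=\sup\Big\{\frac{\|x\|_X+\|y\|_X}{\|x-y\|_X}\Big\|\frac{x}{\|x\|_X}-\frac{y}{\|y\|_X}\Big\|_X: x,y\in X,\ x\neq0,\ y\neq0,\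 x\neq y\Big\}$. *)

theory Defs
  imports "HOL-Analysis.Analysis"
begin

text \<open>Elements are functions; the space is understood modulo
  null functions, so "nonzero" / "distinct" are expressed through the (semi)norm.\<close>

definition LM_set :: "real \<Rightarrow> real \<Rightarrow> ('a::euclidean_space \<Rightarrow> real) set" where
  "LM_set p q = {f. f \<in> borel_measurable lebesgue \<and>
      (\<forall>r>0. set_integrable lebesgue (ball 0 r) (\<lambda>y. \<bar>f y\<bar> powr p)) \<and>
      bdd_above ((\<lambda>r. measure lebesgue (ball (0::'a) r) powr (1/q - 1/p) *
          (LINT y:ball 0 r|lebesgue. \<bar>f y\<bar> powr p) powr (1/p)) ` {0<..})}"

definition LM_norm :: "real \<Rightarrow> real \<Rightarrow> ('a::euclidean_space \<Rightarrow> real) \<Rightarrow> real" where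
  "LM_norm p q f = (SUP r\<in>{0<..}. measure lebesgue (ball (0::'a) r) powr (1/q - 1/p) *
          (LINT y:ball 0 r|lebesgue. \<bar>f y\<bar> powr p) powr (1/p))"

definition C_NJ :: "('a \<Rightarrow> real) set \<Rightarrow> (('a \<Rightarrow> real) \<Rightarrow> real) \<Rightarrow> ereal" where
  "C_NJ X N = (SUP xy \<in> {(x,y). x \<in> X \<and> y \<in> X \<and> N x \<noteq> 0 \<and> N y \<noteq> 0}.
     ereal (((N (\<lambda>t. fst xy t + snd xy t))^2 + (N (\<lambda>t. fst xy t - snd xy t))^2)
            / (2 * ((N (fst xy))^2 + (N (snd xy))^2))))"

definition C_J :: "('a \<Rightarrow> real) set \<Rightarrow> (('a \<Rightarrow> real) \<Rightarrow> real) \<Rightarrow> ereal" where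
  "C_J X N = (SUP xy \<in> {(x,y). x \<in> X \<and> y \<in> X \<and> N x = 1 \<and> N y = 1}.
     ereal (min (N (\<lambda>t. fst xy t + snd xy t)) (N (\<lambda>t. fst xy t - snd xy t))))"

definition C_DW :: "('a \<Rightarrow> real) set \<Rightarrow> (('a \<Rightarrow> real) \<Rightarrow> real) \<Rightarrow> ereal" where
  "C_DW X N = (SUP xy \<in> {(x,y). x \<in> X \<and> y \<in> X \<and> N x \<noteq> 0 \<and> N y \<noteq> 0
                                \<and> N (\<lambda>t. x t - y t) \<noteq> 0}.
     ereal ((N (fst xy) + N (snd xy)) / N (\<lambda>t. fst xy t - snd xy t)
       * N (\<lambda>t. fst xy t / N (fst xy) - snd xy t / N (snd xy))))"

end

theory Submission
  imports Defs
begin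


lemma pconv:
  fixes p s t l :: real
  assumes p: "1 \<le> p" and s: "0 \<le> s" and t: "0 \<le> t" and l: "0 \<le> l" "l \<le> 1"
  shows "(l * s + (1 - l) * t) powr p \<le> l * s powr p + (1-l) * t powr p"
proof (cases "s > 0 \<and> t > 0")
  case True
  then show ?thesis using convex_onD[OF powr_convex[OF p], of "1 - l" s t] l by (auto simp: algebra_simps)
next
  case False
  then have "s = 0 \<or> t = 0" using s t by auto
  then show ?thesis
  proof
    assume "s = 0"
    have "(1-l) powr p \<le> (1-l) powr 1" using l p by (intro powr_mono') auto
    then have "(1-l) powr p * t powr p \<le> (1-l) * t powr p" using l
      by (intro mult_right_mono) auto
    then show ?thesis using \<open>s = 0\<close> l t p by (simp add: powr_mult)
  next
    assume "t = 0"
    have "l powr p \<le> l powr 1" using l p by (intro powr_mono') auto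
    then have "l powr p * s powr p \<le> l * s powr p" using l
      by (intro mult_right_mono) auto
    then show ?thesis using \<open>t = 0\<close> l s p by (simp add: powr_mult)
  qed
qed

lemma pointwise_mink:
  fixes p a b x y :: real
  assumes p: "1 \<le> p" and a: "0 < a" and b: "0 < b"
  shows "\<bar>x + y\<bar> powr p \<le> (a+b) powr p * ((a/(a+b)) / a powr p * \<bar>x\<bar> powr p + (b/(a+b)) / b powr p * \<bar>y\<bar> powr p)"
proof -
  define l where "l = a/(a+b)"
  have l: "0 \<le> l" "l \<le> 1" using a b by (auto simp: l_def)
  have 1: "1 - l = b/(a+b)" using a b by (simp add: l_def field_simps)
  have e: "(a+b) * (l * (\<bar>x\<bar>/a) + (1-l) * (\<bar>y\<bar>/b)) = \<bar>x\<bar> + \<bar>y\<bar>"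
  proof -
    have "l * (\<bar>x\<bar>/a) = \<bar>x\<bar>/(a+b)" using a b by (simp add: l_def)
    moreover have "(1-l) * (\<bar>y\<bar>/b) = \<bar>y\<bar>/(a+b)" using a b by (simp add: 1)
    ultimately
    show ?thesis using a b by (simp add: add_divide_distrib[symmetric])
  qed
  have "\<bar>x+y\<bar> \<le> (a+b) * (l * (\<bar>x\<bar>/a) + (1-l) * (\<bar>y\<bar>/b))"
    unfolding e by simp
  then have "\<bar>x+y\<bar> powr p \<le> ((a+b) * (l * (\<bar>x\<bar>/a) + (1-l) * (\<bar>y\<bar>/b))) powr p"
    using p by (intro powr_mono2) auto
  also have "\<dots> = (a+b) powr p * (l * (\<bar>x\<bar>/a) + (1-l) * (\<bar>y\<bar>/b)) powr p"
    using a b l by (simp add: powr_mult)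
  also have "\<dots> \<le> (a+b) powr p * (l * (\<bar>x\<bar>/a) powr p + (1-l) * (\<bar>y\<bar>/b) powr p)"
    using a b l p by (intro mult_left_mono pconv) auto
  also have "\<dots> = (a+b) powr p * ((a/(a+b)) / a powr p * \<bar>x\<bar> powr p + (b/(a+b)) / b powr p * \<bar>y\<bar> powr p)"
    using a b unfolding 1 by (simp add: powr_divide l_def)
  finally show ?thesis .
qed

lemma minkowski:
  fixes f g :: "'b \<Rightarrow> real"
  assumes p: "1 \<le> p" and fm: "f \<in> borel_measurable M" and gm: "g \<in> borel_measurable M"
    and fi: "integrable M (\<lambda>x. \<bar>f x\<bar> powr p)" and gi: "integrable M (\<lambda>x. \<bar>g x\<bar> powr p)"
  shows "integrable M (\<lambda>x. \<bar>f x + g x\<bar> powr p)"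
    and "(\<integral>x. \<bar>f x + g x\<bar> powr p \<partial>M) powr (1/p) \<le> (\<integral>x. \<bar>f x\<bar> powr p \<partial>M) powr (1/p) + (\<integral>x. \<bar>g x\<bar> powr p \<partial>M) powr (1/p)"
proof -
  define A where "A = (\<integral>x. \<bar>f x\<bar> powr p \<partial>M)"
  define B where "B = (\<integral>x. \<bar>g x\<bar> powr p \<partial>M)"
  have A0: "0 \<le> A" unfolding A_def by (intro Bochner_Integration.integral_nonneg) auto
  have B0: "0 \<le> B" unfolding B_def by (intro Bochner_Integration.integral_nonneg) auto
  have Aeq: "A = (A powr (1/p)) powr p" using A0 p by (simp add: powr_powr)
  have Beq: "B = (B powr (1/p)) powr p" using B0 p by (simp add: powr_powr)
  have meas: "(\<lambda>x. \<bar>f x + g x\<bar> powr p) \<in> borel_measurable M" using fm gm by measurable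
  have key: "integrable M (\<lambda>x. \<bar>f x + g x\<bar> powr p) \<and> (\<integral>x. \<bar>f x + g x\<bar> powr p \<partial>M) \<le> (a+b) powr p"
    if ab: "A powr (1/p) < a" "B powr (1/p) < b" for a b :: real
  proof -
    have a: "0 < a" using ab(1) by (smt (verit) powr_ge_zero)
    have b: "0 < b" using ab(2) by (smt (verit) powr_ge_zero)
    define c1 where "c1 = (a/(a+b)) / a powr p"
    define c2 where "c2 = (b/(a+b)) / b powr p"
    let ?h = "\<lambda>x. (a+b) powr p * (c1 * \<bar>f x\<bar> powr p + c2 * \<bar>g x\<bar> powr p)"
    have hi: "integrable M ?h" using fi gi by auto
    have bd: "\<And>x. \<bar>f x + g x\<bar> powr p \<le> ?h x"
      unfolding c1_def c2_def by (rule pointwise_mink[OF p a b])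
    have I: "integrable M (\<lambda>x. \<bar>f x + g x\<bar> powr p)"
      by (rule Bochner_Integration.integrable_bound[OF hi meas]) (rule AE_I2, simp, rule order_trans[OF bd abs_ge_self])
    have "(\<integral>x. \<bar>f x + g x\<bar> powr p \<partial>M) \<le> (\<integral>x. ?h x \<partial>M)"
      by (intro integral_mono I hi bd)
    also have "\<dots> = (a+b) powr p * (c1 * A + c2 * B)"
      using fi gi by (simp add: A_def B_def)
    also have "\<dots> \<le> (a+b) powr p * (a/(a+b) + b/(a+b))"
    proof -
      have "A \<le> a powr p" using Aeq ab(1) p A0 by (metis powr_ge_zero powr_mono2 less_le_trans less_imp_le zero_le_one order_trans)
      then have "A / a powr p \<le> 1" using a by simp
      then have 1: "c1 * A \<le> a/(a+b)" using a b mult_left_mono[of "A / a powr p" 1 "a/(a+b)"] unfolding c1_def by simp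
      have "B \<le> b powr p" using Beq ab(2) p B0 by (metis powr_ge_zero powr_mono2 less_le_trans less_imp_le zero_le_one order_trans)
      then have "B / b powr p \<le> 1" using b by simp
      then have 2: "c2 * B \<le> b/(a+b)" using a b mult_left_mono[of "B / b powr p" 1 "b/(a+b)"] unfolding c2_def by simp
      show ?thesis using 1 2 by (intro mult_left_mono) auto
    qed
    also have "\<dots> = (a+b) powr p" using a b by (simp add: add_divide_distrib[symmetric])
    finally show ?thesis using I by auto
  qed
  show "integrable M (\<lambda>x. \<bar>f x + g x\<bar> powr p)"
    using key[of "A powr (1/p) + 1" "B powr (1/p) + 1"] by auto
  show "(\<integral>x. \<bar>f x + g x\<bar> powr p \<partial>M) powr (1/p) \<le> A powr (1/p) + B powr (1/p)"
  proof (rule field_le_epsilon)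
    fix e :: real assume e: "0 < e"
    have "(\<integral>x. \<bar>f x + g x\<bar> powr p \<partial>M) \<le> (A powr (1/p) + e/2 + (B powr (1/p) + e/2)) powr p"
      using key[of "A powr (1/p) + e/2" "B powr (1/p) + e/2"] e by auto
    then have "(\<integral>x. \<bar>f x + g x\<bar> powr p \<partial>M) powr (1/p) \<le> ((A powr (1/p) + e/2 + (B powr (1/p) + e/2)) powr p) powr (1/p)"
      using p by (intro powr_mono2) (auto intro: Bochner_Integration.integral_nonneg)
    also have "\<dots> = A powr (1/p) + B powr (1/p) + e"
      using p e by (simp add: powr_powr add_nonneg_nonneg)
    finally show "(\<integral>x. \<bar>f x + g x\<bar> powr p \<partial>M) powr (1/p) \<le> A powr (1/p) + B powr (1/p) + e" .
  qed
qed
definition val :: "real \<Rightarrow> real \<Rightarrow> ('a::euclidean_space \<Rightarrow> real) \<Rightarrow> real \<Rightarrow> real" where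
  "val p q f r = measure lebesgue (ball (0::'a) r) powr (1/q - 1/p) *
          (LINT y:ball 0 r|lebesgue. \<bar>f y\<bar> powr p) powr (1/p)"

lemma LM_norm_val: "LM_norm p q f = (SUP r\<in>{0<..}. val p q f r)"
  by (simp add: LM_norm_def val_def)

lemma LM_set_iff: "f \<in> LM_set p q \<longleftrightarrow> f \<in> borel_measurable lebesgue \<and>
      (\<forall>r>0. set_integrable lebesgue (ball 0 r) (\<lambda>y. \<bar>f y\<bar> powr p)) \<and>
      bdd_above (val p q f ` {0<..})"
  by (simp add: LM_set_def val_def)

lemma val_nonneg: "0 \<le> val p q f r"
  by (simp add: val_def)

lemma val_le_norm: "f \<in> LM_set p q \<Longrightarrow> 0 < r \<Longrightarrow> val p q f r \<le> LM_norm p q f"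
  unfolding LM_norm_val by (rule cSUP_upper) (auto simp: LM_set_iff)

lemma norm_le: "(\<And>r. 0 < r \<Longrightarrow> val p q f r \<le> B) \<Longrightarrow> LM_norm p q f \<le> B"
  unfolding LM_norm_val by (rule cSUP_least) auto

lemma norm_nonneg: "f \<in> LM_set p q \<Longrightarrow> 0 \<le> LM_norm p q f"
  using val_le_norm[of f p q 1] val_nonneg[of p q f 1] by auto

lemma ball_sets[measurable]: "ball (x::'a::euclidean_space) r \<in> sets lebesgue"
  by simp

lemma LM_mono:
  assumes g: "g \<in> LM_set p q" and fm: "f \<in> borel_measurable lebesgue"
    and le: "\<And>x. \<bar>f x\<bar> \<le> \<bar>g x\<bar>" and p: "0 < p"
  shows "f \<in> LM_set p q" "\<And>r. 0 < r \<Longrightarrow> val p q f r \<le> val p q g r" "LM_norm p q f \<le> LM_norm p q g"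
proof -
  have gi: "set_integrable lebesgue (ball 0 r) (\<lambda>y. \<bar>g y\<bar> powr p)" if "r > 0" for r
    using g that by (auto simp: LM_set_iff)
  have fi: "set_integrable lebesgue (ball 0 r) (\<lambda>y. \<bar>f y\<bar> powr p)" if "r > 0" for r
  proof -
    have "integrable lebesgue (\<lambda>y. indicator (ball 0 r) y *\<^sub>R \<bar>g y\<bar> powr p)"
      using gi[OF that] by (simp add: set_integrable_def)
    then show ?thesis unfolding set_integrable_def
    proof (rule Bochner_Integration.integrable_bound)
      show "(\<lambda>y. indicator (ball 0 r) y *\<^sub>R \<bar>f y\<bar> powr p) \<in> borel_measurable lebesgue"
        using fm by measurable
      show "AE x in lebesgue. norm (indicator (ball 0 r) x *\<^sub>R \<bar>f x\<bar> powr p)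
          \<le> norm (indicator (ball 0 r) x *\<^sub>R \<bar>g x\<bar> powr p)"
        using le p by (intro AE_I2) (auto simp: indicator_def intro: powr_mono2)
    qed
  qed
  show vle: "val p q f r \<le> val p q g r" if r: "0 < r" for r
  proof -
    have "(LINT y:ball 0 r|lebesgue. \<bar>f y\<bar> powr p) \<le> (LINT y:ball 0 r|lebesgue. \<bar>g y\<bar> powr p)"
      using le p by (intro set_integral_mono fi gi r powr_mono2) auto
    moreover have "0 \<le> (LINT y:ball 0 r|lebesgue. \<bar>f y\<bar> powr p)"
      unfolding set_lebesgue_integral_def by (intro Bochner_Integration.integral_nonneg) auto
    ultimately show ?thesis unfolding val_def using p
      by (intro mult_left_mono powr_mono2) auto
  qed
  show f: "f \<in> LM_set p q"
    unfolding LM_set_iff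
  proof (intro conjI fm allI impI fi)
    show "bdd_above (val p q f ` {0<..})"
      using g vle val_le_norm[OF g] by (auto simp: bdd_above_def intro!: exI[of _ "LM_norm p q g"] order_trans[OF vle])
  qed
  show "LM_norm p q f \<le> LM_norm p q g"
    by (rule norm_le, rule order_trans[OF vle val_le_norm[OF g]])
qed


lemma abs_ind_powr: "0 < p \<Longrightarrow> \<bar>indicator A y * (f y::real)\<bar> powr p = indicator A y *\<^sub>R \<bar>f y\<bar> powr p"
  by (auto simp: indicator_def)

lemma LM_scale:
  assumes f: "f \<in> LM_set p q" and p: "0 < p"
  shows "(\<lambda>t. c * f t) \<in> LM_set p q" "\<And>r. val p q (\<lambda>t. c * f t) r = \<bar>c\<bar> * val p q f r"
    "LM_norm p q (\<lambda>t. c * f t) = \<bar>c\<bar> * LM_norm p q f"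
proof -
  have eq: "\<bar>c * f y\<bar> powr p = \<bar>c\<bar> powr p * \<bar>f y\<bar> powr p" for y
    by (simp add: abs_mult powr_mult)
  show v: "val p q (\<lambda>t. c * f t) r = \<bar>c\<bar> * val p q f r" for r
  proof -
    have "(LINT y:ball 0 r|lebesgue. \<bar>c * f y\<bar> powr p) powr (1/p)
        = (\<bar>c\<bar> powr p * (LINT y:ball 0 r|lebesgue. \<bar>f y\<bar> powr p)) powr (1/p)"
      unfolding eq by simp
    also have "\<dots> = \<bar>c\<bar> * (LINT y:ball 0 r|lebesgue. \<bar>f y\<bar> powr p) powr (1/p)"
      using p by (simp add: powr_mult powr_powr)
    finally show ?thesis unfolding val_def by simp
  qed
  show cf: "(\<lambda>t. c * f t) \<in> LM_set p q"
    unfolding LM_set_iff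
  proof (intro conjI allI impI)
    show "(\<lambda>t. c * f t) \<in> borel_measurable lebesgue" using f by (auto simp: LM_set_iff)
    show "set_integrable lebesgue (ball 0 r) (\<lambda>y. \<bar>c * f y\<bar> powr p)" if "0 < r" for r
      unfolding eq using f that by (auto simp: LM_set_iff)
    show "bdd_above (val p q (\<lambda>t. c * f t) ` {0<..})"
      unfolding v using f val_le_norm[OF f]
      by (auto simp: bdd_above_def intro!: exI[of _ "\<bar>c\<bar> * LM_norm p q f"] mult_left_mono)
  qed
  show "LM_norm p q (\<lambda>t. c * f t) = \<bar>c\<bar> * LM_norm p q f"
  proof (rule antisym)
    show "LM_norm p q (\<lambda>t. c * f t) \<le> \<bar>c\<bar> * LM_norm p q f"
      by (rule norm_le) (auto simp: v intro: mult_left_mono val_le_norm[OF f])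
    show "\<bar>c\<bar> * LM_norm p q f \<le> LM_norm p q (\<lambda>t. c * f t)"
    proof (cases "c = 0")
      case True then show ?thesis using norm_nonneg[OF cf] by simp
    next
      case False
      have "LM_norm p q f \<le> LM_norm p q (\<lambda>t. c * f t) / \<bar>c\<bar>"
      proof (rule norm_le)
        fix r :: real assume "0 < r"
        then have "\<bar>c\<bar> * val p q f r \<le> LM_norm p q (\<lambda>t. c * f t)"
          using val_le_norm[OF cf] v by metis
        then show "val p q f r \<le> LM_norm p q (\<lambda>t. c * f t) / \<bar>c\<bar>"
          using False by (simp add: field_simps)
      qed
      then show ?thesis using False by (simp add: field_simps)
    qed
  qed
qed

lemma LM_add:
  assumes f: "f \<in> LM_set p q" and g: "g \<in> LM_set p q" and p: "1 \<le> p"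
  shows "(\<lambda>t. f t + g t) \<in> LM_set p q"
    "\<And>r. 0 < r \<Longrightarrow> val p q (\<lambda>t. f t + g t) r \<le> val p q f r + val p q g r"
    "LM_norm p q (\<lambda>t. f t + g t) \<le> LM_norm p q f + LM_norm p q g"
proof -
  have fm: "f \<in> borel_measurable lebesgue" and gm: "g \<in> borel_measurable lebesgue"
    using f g by (auto simp: LM_set_iff)
  have M: "set_integrable lebesgue (ball 0 r) (\<lambda>y. \<bar>f y + g y\<bar> powr p) \<and>
     (LINT y:ball 0 r|lebesgue. \<bar>f y + g y\<bar> powr p) powr (1/p) \<le>
     (LINT y:ball 0 r|lebesgue. \<bar>f y\<bar> powr p) powr (1/p) + (LINT y:ball 0 r|lebesgue. \<bar>g y\<bar> powr p) powr (1/p)"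
    if r: "0 < r" for r
  proof -
    let ?F = "\<lambda>y. indicator (ball 0 r) y * f y"
    let ?G = "\<lambda>y. indicator (ball 0 r) y * g y"
    have pp: "0 < p" using p by simp
    have e1: "\<bar>?F y\<bar> powr p = indicator (ball 0 r) y *\<^sub>R \<bar>f y\<bar> powr p" for y using abs_ind_powr[OF pp] .
    have e2: "\<bar>?G y\<bar> powr p = indicator (ball 0 r) y *\<^sub>R \<bar>g y\<bar> powr p" for y using abs_ind_powr[OF pp] .
    have e3: "\<bar>?F y + ?G y\<bar> powr p = indicator (ball 0 r) y *\<^sub>R \<bar>f y + g y\<bar> powr p" for y
      using abs_ind_powr[OF pp, of "ball 0 r" y "\<lambda>y. f y + g y"] by (simp add: distrib_left)
    have Fm: "?F \<in> borel_measurable lebesgue" using fm by measurable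
    have Gm: "?G \<in> borel_measurable lebesgue" using gm by measurable
    have Fi: "integrable lebesgue (\<lambda>y. \<bar>?F y\<bar> powr p)"
      unfolding e1 using f r by (auto simp: LM_set_iff set_integrable_def)
    have Gi: "integrable lebesgue (\<lambda>y. \<bar>?G y\<bar> powr p)"
      unfolding e2 using g r by (auto simp: LM_set_iff set_integrable_def)
    from minkowski[OF p Fm Gm Fi Gi] show ?thesis
      unfolding e1 e2 e3 set_integrable_def set_lebesgue_integral_def by simp
  qed
  show vle: "val p q (\<lambda>t. f t + g t) r \<le> val p q f r + val p q g r" if r: "0 < r" for r
    using M[OF r] unfolding val_def by (simp add: distrib_left[symmetric] mult_left_mono)
  show fg: "(\<lambda>t. f t + g t) \<in> LM_set p q"
    unfolding LM_set_iff
  proof (intro conjI allI impI)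
    show "(\<lambda>t. f t + g t) \<in> borel_measurable lebesgue" using fm gm by measurable
    show "set_integrable lebesgue (ball 0 r) (\<lambda>y. \<bar>f y + g y\<bar> powr p)" if "0 < r" for r
      using M[OF that] by simp
    show "bdd_above (val p q (\<lambda>t. f t + g t) ` {0<..})"
      using vle val_le_norm[OF f] val_le_norm[OF g]
      by (auto simp: bdd_above_def intro!: exI[of _ "LM_norm p q f + LM_norm p q g"] order_trans[OF vle] add_mono)
  qed
  show "LM_norm p q (\<lambda>t. f t + g t) \<le> LM_norm p q f + LM_norm p q g"
    by (rule norm_le, rule order_trans[OF vle add_mono[OF val_le_norm[OF f] val_le_norm[OF g]]])
qed


lemma LM_neg:
  assumes f: "f \<in> LM_set p q" and p: "0 < p"
  shows "(\<lambda>t. - f t) \<in> LM_set p q" "LM_norm p q (\<lambda>t. - f t) = LM_norm p q f"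
proof -
  have e: "(\<lambda>t. - f t) = (\<lambda>t. (-1) * f t)" by simp
  show "(\<lambda>t. - f t) \<in> LM_set p q" unfolding e by (rule LM_scale(1)[OF f p])
  show "LM_norm p q (\<lambda>t. - f t) = LM_norm p q f" unfolding e LM_scale(3)[OF f p] by simp
qed

lemma LM_diff:
  assumes f: "f \<in> LM_set p q" and g: "g \<in> LM_set p q" and p: "1 \<le> p"
  shows "(\<lambda>t. f t - g t) \<in> LM_set p q"
    "LM_norm p q (\<lambda>t. f t - g t) \<le> LM_norm p q f + LM_norm p q g"
proof -
  have e: "(\<lambda>t. f t - g t) = (\<lambda>t. f t + - g t)" by simp
  have pp: "0 < p" using p by simp
  show "(\<lambda>t. f t - g t) \<in> LM_set p q" unfolding e by (rule LM_add(1)[OF f LM_neg(1)[OF g pp] p])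
  show "LM_norm p q (\<lambda>t. f t - g t) \<le> LM_norm p q f + LM_norm p q g"
    unfolding e using LM_add(3)[OF f LM_neg(1)[OF g pp] p] LM_neg(2)[OF g pp] by simp
qed

lemma NJ_upper:
  assumes p: "1 \<le> p"
  shows "C_NJ (LM_set p q :: ('a::euclidean_space \<Rightarrow> real) set) (LM_norm p q) \<le> 2"
  unfolding C_NJ_def
proof (rule SUP_least)
  fix xy assume "xy \<in> {(x, y). x \<in> (LM_set p q :: ('a \<Rightarrow> real) set) \<and> y \<in> (LM_set p q :: ('a \<Rightarrow> real) set) \<and> LM_norm p q x \<noteq> 0 \<and> LM_norm p q y \<noteq> 0}"
  then obtain x y where xy: "xy = (x, y)" and x: "x \<in> LM_set p q" and y: "y \<in> LM_set p q" and nx: "LM_norm p q x \<noteq> 0"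
    by auto
  define a where "a = LM_norm p q x"
  define b where "b = LM_norm p q y"
  define s where "s = LM_norm p q (\<lambda>t. x t + y t)"
  define d where "d = LM_norm p q (\<lambda>t. x t - y t)"
  have a: "0 \<le> a" "a \<noteq> 0" using norm_nonneg[OF x] nx by (auto simp: a_def)
  have b: "0 \<le> b" using norm_nonneg[OF y] by (auto simp: b_def)
  have s: "0 \<le> s" "s \<le> a + b" unfolding s_def a_def b_def
    using LM_add[OF x y p] norm_nonneg by auto
  have d: "0 \<le> d" "d \<le> a + b" unfolding d_def a_def b_def
    using LM_diff[OF x y p] norm_nonneg by auto
  have pos: "0 < 2 * (a^2 + b^2)" using a by (auto intro: add_pos_nonneg)
  have "s^2 + d^2 \<le> (a+b)^2 + (a+b)^2"
    using s d by (intro add_mono power_mono) auto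
  also have "\<dots> \<le> 2 * (2 * (a^2 + b^2))"
    using sum_squares_ge_zero[of "a - b" 0] by (simp add: power2_eq_square algebra_simps)
  finally have "(s^2 + d^2) / (2 * (a^2 + b^2)) \<le> 2"
    using pos by (simp add: divide_le_eq)
  then show "ereal (((LM_norm p q (\<lambda>t. fst xy t + snd xy t))^2 + (LM_norm p q (\<lambda>t. fst xy t - snd xy t))^2)
            / (2 * ((LM_norm p q (fst xy))^2 + (LM_norm p q (snd xy))^2))) \<le> 2"
    unfolding xy fst_conv snd_conv s_def[symmetric] d_def[symmetric] a_def[symmetric] b_def[symmetric] by simp
qed

lemma J_upper:
  assumes p: "1 \<le> p"
  shows "C_J (LM_set p q :: ('a::euclidean_space \<Rightarrow> real) set) (LM_norm p q) \<le> 2"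
  unfolding C_J_def
proof (rule SUP_least)
  fix xy assume "xy \<in> {(x, y). x \<in> (LM_set p q :: ('a \<Rightarrow> real) set) \<and> y \<in> (LM_set p q :: ('a \<Rightarrow> real) set) \<and> LM_norm p q x = 1 \<and> LM_norm p q y = 1}"
  then obtain x y where xy: "xy = (x, y)" and x: "x \<in> LM_set p q" and y: "y \<in> LM_set p q" and nx: "LM_norm p q x = 1" and ny: "LM_norm p q y = 1"
    by auto
  have "LM_norm p q (\<lambda>t. x t + y t) \<le> 2" using LM_add(3)[OF x y p] nx ny by simp
  then have "min (LM_norm p q (\<lambda>t. x t + y t)) (LM_norm p q (\<lambda>t. x t - y t)) \<le> 2" by linarith
  then show "ereal (min (LM_norm p q (\<lambda>t. fst xy t + snd xy t)) (LM_norm p q (\<lambda>t. fst xy t - snd xy t))) \<le> 2"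
    unfolding xy fst_conv snd_conv by (simp only: numeral_eq_ereal ereal_less_eq(3))
qed

lemma DW_aux:
  assumes x: "x \<in> LM_set p q" and y: "y \<in> LM_set p q" and p: "1 \<le> p"
    and a: "0 < LM_norm p q x" and b: "0 < LM_norm p q y"
  shows "LM_norm p q (\<lambda>t. x t / LM_norm p q x - y t / LM_norm p q y) \<le> 2 * LM_norm p q (\<lambda>t. x t - y t) / LM_norm p q x"
proof -
  define a where "a = LM_norm p q x"
  define b where "b = LM_norm p q y"
  define d where "d = LM_norm p q (\<lambda>t. x t - y t)"
  have a0: "0 < a" and b0: "0 < b" using a b by (simp_all add: a_def b_def)
  have pp: "0 < p" using p by simp
  have xy: "(\<lambda>t. x t - y t) \<in> LM_set p q" using LM_diff[OF x y p] by simp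
  have "a \<le> d + b"
  proof -
    have e: "(\<lambda>t. (x t - y t) + y t) = x" by simp
    have "LM_norm p q (\<lambda>t. (x t - y t) + y t) \<le> d + b" unfolding d_def b_def by (rule LM_add(3)[OF xy y p])
    then show ?thesis unfolding e a_def .
  qed
  moreover have "b \<le> d + a"
  proof -
    have e: "(\<lambda>t. - (x t - y t) + x t) = y" by simp
    have "LM_norm p q (\<lambda>t. - (x t - y t) + x t) \<le> LM_norm p q (\<lambda>t. - (x t - y t)) + a" 
      unfolding a_def by (rule LM_add(3)[OF LM_neg(1)[OF xy pp] x p])
    then show ?thesis unfolding e b_def LM_neg(2)[OF xy pp] d_def .
  qed
  ultimately have ab: "\<bar>b - a\<bar> \<le> d" by linarith
  have e: "(\<lambda>t. x t / a - y t / b) = (\<lambda>t. (1/a) * (x t - y t) + (1/a - 1/b) * y t)"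
  proof
    fix t show "x t / a - y t / b = (1/a) * (x t - y t) + (1/a - 1/b) * y t"
      by (simp add: diff_divide_distrib right_diff_distrib left_diff_distrib)
  qed
  have s1: "LM_norm p q (\<lambda>t. (1/a) * (x t - y t)) = (1/a) * d"
  proof -
    have "LM_norm p q (\<lambda>t. (1/a) * (x t - y t)) = \<bar>1/a\<bar> * d"
      using LM_scale(3)[OF xy pp, of "1/a"] unfolding d_def .
    then show ?thesis using a0 by simp
  qed
  have s2: "LM_norm p q (\<lambda>t. (1/a - 1/b) * y t) = \<bar>1/a - 1/b\<bar> * b"
    using LM_scale(3)[OF y pp, of "1/a - 1/b"] unfolding b_def .
  have "LM_norm p q (\<lambda>t. x t / a - y t / b) \<le> LM_norm p q (\<lambda>t. (1/a) * (x t - y t)) + LM_norm p q (\<lambda>t. (1/a - 1/b) * y t)"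
    unfolding e by (intro LM_add(3) LM_scale(1) xy y pp p)
  also have "\<dots> = (1/a) * d + \<bar>1/a - 1/b\<bar> * b"
    unfolding s1 s2 ..
  also have "\<bar>1/a - 1/b\<bar> * b = \<bar>b - a\<bar> / a"
  proof -
    have "1/a - 1/b = (b - a) / (a * b)" using a0 b0 by (simp add: field_simps)
    then have "\<bar>1/a - 1/b\<bar> = \<bar>b - a\<bar> / (a * b)" using a0 b0 by simp
    then show ?thesis using b0 by simp
  qed
  also have "(1/a) * d + \<bar>b - a\<bar> / a \<le> 2 * d / a"
  proof -
    have "(1/a) * d + \<bar>b - a\<bar> / a = (d + \<bar>b - a\<bar>) / a" by (simp add: add_divide_distrib)
    also have "\<dots> \<le> (2 * d) / a" using ab a0 by (intro divide_right_mono) auto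
    finally show ?thesis .
  qed
  finally show ?thesis unfolding a_def b_def d_def .
qed

lemma DW_upper:
  assumes p: "1 \<le> p"
  shows "C_DW (LM_set p q :: ('a::euclidean_space \<Rightarrow> real) set) (LM_norm p q) \<le> 4"
  unfolding C_DW_def
proof (rule SUP_least)
  fix xy assume "xy \<in> {(x, y). x \<in> (LM_set p q :: ('a \<Rightarrow> real) set) \<and> y \<in> (LM_set p q :: ('a \<Rightarrow> real) set) \<and> LM_norm p q x \<noteq> 0 \<and> LM_norm p q y \<noteq> 0
                                \<and> LM_norm p q (\<lambda>t. x t - y t) \<noteq> 0}"
  then obtain x y where xy: "xy = (x, y)" and x: "x \<in> LM_set p q" and y: "y \<in> LM_set p q" and nx: "LM_norm p q x \<noteq> 0"
    and ny: "LM_norm p q y \<noteq> 0" and nd: "LM_norm p q (\<lambda>t. x t - y t) \<noteq> 0"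
    by auto
  define a where "a = LM_norm p q x"
  define b where "b = LM_norm p q y"
  define d where "d = LM_norm p q (\<lambda>t. x t - y t)"
  define w where "w = LM_norm p q (\<lambda>t. x t / a - y t / b)"
  have a: "0 < a" using norm_nonneg[OF x] nx by (auto simp: a_def)
  have b: "0 < b" using norm_nonneg[OF y] ny by (auto simp: b_def)
  have d: "0 < d" using norm_nonneg[OF LM_diff(1)[OF x y p]] nd by (auto simp: d_def)
  have w1: "w \<le> 2 * d / a" using DW_aux[OF x y p] a b by (simp add: w_def a_def b_def d_def)
  have w2: "w \<le> 2 * d / b"
  proof -
    have e1: "(\<lambda>t. y t / b) = (\<lambda>t. (1/b) * y t)" "(\<lambda>t. x t / a) = (\<lambda>t. (1/a) * x t)" by auto
    have yb: "(\<lambda>t. y t / b) \<in> LM_set p q" unfolding e1 using p by (intro LM_scale(1)[OF y]) simp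
    have xa: "(\<lambda>t. x t / a) \<in> LM_set p q" unfolding e1 using p by (intro LM_scale(1)[OF x]) simp
    have e2: "(\<lambda>t. x t / a - y t / b) = (\<lambda>t. - (y t / b - x t / a))" by auto
    have "w = LM_norm p q (\<lambda>t. y t / b - x t / a)"
      unfolding w_def e2 using LM_neg(2)[OF LM_diff(1)[OF yb xa p]] p by simp
    also have "\<dots> \<le> 2 * LM_norm p q (\<lambda>t. y t - x t) / b"
      using DW_aux[OF y x p] a b by (simp add: a_def b_def)
    also have "LM_norm p q (\<lambda>t. y t - x t) = d"
      using LM_neg(2)[OF LM_diff(1)[OF x y p]] p by (simp add: d_def)
    finally show ?thesis .
  qed
  have "(a + b) / d * w \<le> 4"
  proof (cases "b \<le> a")
    case True
    have "(a + b) / d * w \<le> (a + b) / d * (2 * d / a)"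
      using w1 a b d by (intro mult_left_mono) auto
    also have "\<dots> = 2 * (a + b) / a" using d by simp
    also have "\<dots> \<le> 4" using a True by (simp add: divide_le_eq)
    finally show ?thesis .
  next
    case False
    have "(a + b) / d * w \<le> (a + b) / d * (2 * d / b)"
      using w2 a b d by (intro mult_left_mono) auto
    also have "\<dots> = 2 * (a + b) / b" using d by simp
    also have "\<dots> \<le> 4" using b False by (simp add: divide_le_eq)
    finally show ?thesis .
  qed
  then show "ereal ((LM_norm p q (fst xy) + LM_norm p q (snd xy)) / LM_norm p q (\<lambda>t. fst xy t - snd xy t)
       * LM_norm p q (\<lambda>t. fst xy t / LM_norm p q (fst xy) - snd xy t / LM_norm p q (snd xy))) \<le> 4"
    unfolding xy fst_conv snd_conv a_def[symmetric] b_def[symmetric] d_def[symmetric] w_def[symmetric] by simp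
qed


lemma min_le1: "0 < t \<Longrightarrow> 0 < s \<Longrightarrow> 0 < r \<Longrightarrow> u \<le> t powr s \<Longrightarrow> u \<le> t powr (-r) \<Longrightarrow> u \<le> (1::real)"
  by (smt (verit, ccfv_threshold) powr01_less_one powr_less_one powr_one_eq_one)
lemma A: assumes "0 < t" "(1::real) < T" "0 < s" "t \<le> T powr (1/2)" shows "(t/T) powr s \<le> T powr (-s/2)"
proof -
  have "(t/T) powr s \<le> (T powr (1/2) / T) powr s"
    using assms by (intro powr_mono2 divide_right_mono) auto
  also have "T powr (1/2) / T = T powr (-1/2)"
  proof -
    have "T powr (-1/2) = T powr (1/2 - 1)" by simp
    also have "\<dots> = T powr (1/2) / T powr 1" by (rule powr_diff)
    also have "\<dots> = T powr (1/2) / T" using assms by simp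
    finally show ?thesis by simp
  qed
  also have "(T powr (-1/2)) powr s = T powr (-s/2)" by (simp add: powr_powr)
  finally show ?thesis .
qed
lemma B: assumes "0 < t" "(1::real) < T" "0 < r" "t > T powr (1/2)" shows "t powr (-r) \<le> T powr (-r/2)"
proof -
  have "t powr (-r) \<le> (T powr (1/2)) powr (-r)"
    using assms by (intro powr_mono2') auto
  also have "\<dots> = T powr (-r/2)" by (simp add: powr_powr)
  finally show ?thesis .
qed
lemma absL:
  fixes s r t T u1 u2 :: real
  assumes s: "0 < s" and r: "0 < r" and t: "0 < t" and T: "1 < T"
    and u1: "u1 \<le> t powr s" "u1 \<le> t powr (-r)" and u2: "u2 \<le> (t/T) powr s" "u2 \<le> (t/T) powr (-r)"
  shows "u1 + u2 \<le> 1 + T powr (-s/2) + T powr (-r/2)"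
proof (cases "t \<le> T powr (1/2)")
  case True
  have "u1 \<le> 1" using min_le1[OF t s r u1] .
  moreover have "u2 \<le> T powr (-s/2)" using u2(1) A[OF t T s True] by linarith
  ultimately show ?thesis by (smt (verit) powr_ge_zero)
next
  case False
  have "u2 \<le> 1" using min_le1[of "t/T", OF _ s r u2] t T by simp
  moreover have "u1 \<le> T powr (-r/2)" using u1(2) B[OF t T r] False by linarith
  ultimately show ?thesis by (smt (verit) powr_ge_zero)
qed

lemma V_scale: "r \<ge> 0 \<Longrightarrow> measure lebesgue (ball (0::'a::euclidean_space) r) = r ^ DIM('a) * measure lebesgue (ball (0::'a) 1)"
  using content_ball_conv_unit_ball[of r "0::'a"] by simp
lemma V_pos: "r > 0 \<Longrightarrow> measure lebesgue (ball (0::'a::euclidean_space) r) > 0"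
  using content_ball_pos[of r "0::'a"] by simp
lemma V_mono: "r \<le> s \<Longrightarrow> measure lebesgue (ball (0::'a::euclidean_space) r) \<le> measure lebesgue (ball (0::'a) s)"
  using emeasure_lborel_ball_finite[of "0::'a" s]
  by (intro measure_mono_fmeasurable) (auto simp: fmeasurable_def)
lemma ind_int: "integrable lebesgue (\<lambda>y. indicator (ball (0::'a::euclidean_space) r) y *\<^sub>R (indicator (ball 0 s) y :: real))"
  and ind_integral: "(LINT y:ball 0 r|lebesgue. (indicator (ball (0::'a::euclidean_space) s) y :: real)) = measure lebesgue (ball (0::'a) (min r s))"
proof -
  have e: "(\<lambda>y. indicator (ball (0::'a) r) y *\<^sub>R (indicator (ball 0 s) y :: real)) = indicator (ball 0 (min r s))"
    by (auto simp: indicator_def)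
  show "integrable lebesgue (\<lambda>y. indicator (ball (0::'a::euclidean_space) r) y *\<^sub>R (indicator (ball 0 s) y :: real))"
    unfolding e using emeasure_lborel_ball_finite[of "0::'a" "min r s"] by (simp add: integrable_indicator_iff)
  show "(LINT y:ball 0 r|lebesgue. (indicator (ball (0::'a::euclidean_space) s) y :: real)) = measure lebesgue (ball (0::'a) (min r s))"
    unfolding set_lebesgue_integral_def e by simp
qed

lemma bump:
  fixes p q v W Vm :: real
  assumes p: "0 < p" and q: "0 < q" and v: "0 < v" and W: "0 < W" and Vm: "0 \<le> Vm" "Vm \<le> v" "Vm \<le> W"
  shows "v powr (-(1 - p/q)) * ((W powr (-1/q)) powr p * Vm) \<le> (v/W) powr (p/q)"
    and "v powr (-(1 - p/q)) * ((W powr (-1/q)) powr p * Vm) \<le> (v/W) powr (-(1 - p/q))"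
proof -
  have a: "(W powr (-1/q)) powr p = W powr (-(p/q))" by (simp add: powr_powr)
  have "v powr (-(1 - p/q)) * (W powr (-(p/q)) * Vm) \<le> v powr (-(1 - p/q)) * (W powr (-(p/q)) * v)"
    using Vm by (intro mult_left_mono) auto
  also have "\<dots> = (v powr (-(1 - p/q)) * v powr 1) * W powr (-(p/q))" using v by simp
  also have "\<dots> = v powr (-(1 - p/q) + 1) * W powr (-(p/q))" by (simp only: powr_add[symmetric])
  also have "\<dots> = v powr (p/q) * W powr (-(p/q))" by simp
  also have "\<dots> = (v/W) powr (p/q)" using v W by (simp add: powr_divide powr_minus_divide)
  finally show "v powr (-(1 - p/q)) * ((W powr (-1/q)) powr p * Vm) \<le> (v/W) powr (p/q)" unfolding a .
  have "v powr (-(1 - p/q)) * (W powr (-(p/q)) * Vm) \<le> v powr (-(1 - p/q)) * (W powr (-(p/q)) * W)"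
    using Vm by (intro mult_left_mono) auto
  also have "\<dots> = v powr (-(1 - p/q)) * (W powr (-(p/q)) * W powr 1)" using W by simp
  also have "\<dots> = v powr (-(1 - p/q)) * W powr (-(p/q) + 1)" by (simp only: powr_add[symmetric])
  also have "\<dots> = v powr (-(1 - p/q)) * W powr (1 - p/q)" by simp
  also have "\<dots> = (v/W) powr (-(1 - p/q))"
  proof -
    have "W powr (1 - p/q) = 1 / W powr (p/q - 1)" using powr_minus_divide[of W "p/q - 1"] by simp
    then show ?thesis using v W by (simp add: powr_divide)
  qed
  finally show "v powr (-(1 - p/q)) * ((W powr (-1/q)) powr p * Vm) \<le> (v/W) powr (-(1 - p/q))" unfolding a .
qed


definition fa :: "real \<Rightarrow> 'a::euclidean_space \<Rightarrow> real" where
  "fa q = (\<lambda>y. measure lebesgue (ball (0::'a) 1) powr (-1/q) * indicator (ball 0 1) y)"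
definition fb :: "real \<Rightarrow> real \<Rightarrow> 'a::euclidean_space \<Rightarrow> real" where
  "fb q R = (\<lambda>y. measure lebesgue (ball (0::'a) R) powr (-1/q) * (indicator (ball 0 R) y - indicator (ball 0 1) y))"

lemma fab_basic:
  assumes R: "1 < R"
  shows "0 \<le> (fa q :: 'a::euclidean_space \<Rightarrow> real) y" "0 \<le> (fb q R :: 'a \<Rightarrow> real) y"
    "(fa q :: 'a \<Rightarrow> real) y * fb q R y = 0"
    "(fa q :: 'a \<Rightarrow> real) \<in> borel_measurable lebesgue" "(fb q R :: 'a \<Rightarrow> real) \<in> borel_measurable lebesgue"
proof -
  have sub: "y \<in> ball (0::'a) 1 \<Longrightarrow> y \<in> ball 0 R" using R by auto
  show "0 \<le> (fa q :: 'a::euclidean_space \<Rightarrow> real) y" by (simp add: fa_def)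
  show "0 \<le> (fb q R :: 'a \<Rightarrow> real) y" using sub by (auto simp: fb_def indicator_def)
  show "(fa q :: 'a \<Rightarrow> real) y * fb q R y = 0" using sub by (auto simp: fa_def fb_def indicator_def)
  show "(fa q :: 'a \<Rightarrow> real) \<in> borel_measurable lebesgue" unfolding fa_def by measurable
  show "(fb q R :: 'a \<Rightarrow> real) \<in> borel_measurable lebesgue" unfolding fb_def by measurable
qed

lemma h_pow:
  assumes R: "1 < R" and p: "0 < p"
  shows "\<bar>(fa q :: 'a::euclidean_space \<Rightarrow> real) y + fb q R y\<bar> powr p \<le>
     (measure lebesgue (ball (0::'a) 1) powr (-1/q)) powr p * indicator (ball 0 1) y
     + (measure lebesgue (ball (0::'a) R) powr (-1/q)) powr p * indicator (ball 0 R) y"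
proof -
  have sub: "y \<in> ball (0::'a) 1 \<Longrightarrow> y \<in> ball 0 R" using R by auto
  show ?thesis using sub p by (auto simp: fa_def fb_def indicator_def)
qed

lemma ind_sint: "set_integrable lebesgue (ball (0::'a::euclidean_space) r) (\<lambda>y. indicator (ball 0 s) y :: real)"
  unfolding set_integrable_def by (rule ind_int)

lemma h_LM:
  fixes p q R :: real
  assumes p: "1 \<le> p" and pq: "p < q" and R: "1 < R"
    and gm: "g \<in> borel_measurable lebesgue" and gle: "\<And>y. \<bar>g y\<bar> \<le> (fa q :: 'a::euclidean_space \<Rightarrow> real) y + fb q R y"
  shows "g \<in> LM_set p q"
    "LM_norm p q g \<le> (1 + (R ^ DIM('a)) powr (-(p/q)/2) + (R ^ DIM('a)) powr (-(1 - p/q)/2)) powr (1/p)"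
proof -
  define V1 where "V1 = measure lebesgue (ball (0::'a) 1)"
  define VR where "VR = measure lebesgue (ball (0::'a) R)"
  define A1 where "A1 = (V1 powr (-1/q)) powr p"
  define A2 where "A2 = (VR powr (-1/q)) powr p"
  define T where "T = R ^ DIM('a)"
  define K where "K = (1 + T powr (-(p/q)/2) + T powr (-(1 - p/q)/2)) powr (1/p)"
  have pp: "0 < p" and q: "0 < q" using p pq by auto
  have V1: "0 < V1" unfolding V1_def by (rule V_pos) simp
  have T1: "1 < T" unfolding T_def using R by (simp add: one_less_power)
  have VR: "VR = T * V1" unfolding VR_def V1_def T_def using V_scale[of R] R by simp
  have VRp: "0 < VR" using VR T1 V1 by simp
  have dom: "\<bar>g y\<bar> powr p \<le> A1 * indicator (ball (0::'a) 1) y + A2 * indicator (ball 0 R) y" for y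
  proof -
    have "\<bar>g y\<bar> powr p \<le> \<bar>fa q y + fb q R y\<bar> powr p"
      using gle[of y] pp by (intro powr_mono2) auto
    also have "\<dots> \<le> A1 * indicator (ball (0::'a) 1) y + A2 * indicator (ball 0 R) y"
      unfolding A1_def A2_def V1_def VR_def by (rule h_pow[OF R pp])
    finally show ?thesis .
  qed
  have domi: "set_integrable lebesgue (ball 0 r) (\<lambda>y. A1 * indicator (ball (0::'a) 1) y + A2 * indicator (ball 0 R) y)" for r
    by (intro set_integral_add(1) set_integrable_mult_right ind_sint)
  have gi: "set_integrable lebesgue (ball 0 r) (\<lambda>y. \<bar>g y\<bar> powr p)" for r
  proof -
    have "integrable lebesgue (\<lambda>y. indicator (ball (0::'a) r) y *\<^sub>R (A1 * indicator (ball (0::'a) 1) y + A2 * indicator (ball 0 R) y))"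
      using domi[of r] by (simp add: set_integrable_def)
    then show ?thesis unfolding set_integrable_def
    proof (rule Bochner_Integration.integrable_bound)
      show "(\<lambda>y. indicator (ball 0 r) y *\<^sub>R \<bar>g y\<bar> powr p) \<in> borel_measurable lebesgue"
        using gm by measurable
      show "AE x in lebesgue. norm (indicator (ball 0 r) x *\<^sub>R \<bar>g x\<bar> powr p)
          \<le> norm (indicator (ball (0::'a) r) x *\<^sub>R (A1 * indicator (ball (0::'a) 1) x + A2 * indicator (ball 0 R) x))"
      proof (rule AE_I2)
        fix x
        have "0 \<le> \<bar>g x\<bar> powr p" by simp
        then show "norm (indicator (ball 0 r) x *\<^sub>R \<bar>g x\<bar> powr p)
          \<le> norm (indicator (ball (0::'a) r) x *\<^sub>R (A1 * indicator (ball (0::'a) 1) x + A2 * indicator (ball 0 R) x))"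
          using dom[of x] by (auto simp: indicator_def)
      qed
    qed
  qed
  have vle: "val p q g r \<le> K" if r: "0 < r" for r
  proof -
    define v where "v = measure lebesgue (ball (0::'a) r)"
    define X where "X = A1 * measure lebesgue (ball (0::'a) (min r 1)) + A2 * measure lebesgue (ball (0::'a) (min r R))"
    have v: "0 < v" unfolding v_def using r by (rule V_pos)
    have I: "(LINT y:ball 0 r|lebesgue. \<bar>g y\<bar> powr p) \<le> X"
    proof -
      have "(LINT y:ball 0 r|lebesgue. \<bar>g y\<bar> powr p) \<le> (LINT y:ball 0 r|lebesgue. A1 * indicator (ball (0::'a) 1) y + A2 * indicator (ball 0 R) y)"
        by (intro set_integral_mono gi domi dom)
      also have "\<dots> = X" unfolding X_def
        by (simp add: set_integral_add(2)[OF set_integrable_mult_right[OF ind_sint] set_integrable_mult_right[OF ind_sint]] ind_integral)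
      finally show ?thesis .
    qed
    have I0: "0 \<le> (LINT y:ball 0 r|lebesgue. \<bar>g y\<bar> powr p)"
      unfolding set_lebesgue_integral_def by (intro Bochner_Integration.integral_nonneg) auto
    have "val p q g r \<le> v powr (1/q - 1/p) * X powr (1/p)"
      unfolding val_def v_def[symmetric] using I I0 pp by (intro mult_left_mono powr_mono2) auto
    also have "v powr (1/q - 1/p) = (v powr (-(1 - p/q))) powr (1/p)"
      using pp by (simp add: powr_powr field_simps)
    also have "(v powr (-(1 - p/q))) powr (1/p) * X powr (1/p) = (v powr (-(1 - p/q)) * X) powr (1/p)"
      by (simp add: powr_mult)
    also have "\<dots> \<le> K"
    proof -
      define u1 where "u1 = v powr (-(1 - p/q)) * ((V1 powr (-1/q)) powr p * measure lebesgue (ball (0::'a) (min r 1)))"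
      define u2 where "u2 = v powr (-(1 - p/q)) * ((VR powr (-1/q)) powr p * measure lebesgue (ball (0::'a) (min r R)))"
      have u: "v powr (-(1 - p/q)) * X = u1 + u2" unfolding u1_def u2_def X_def A1_def A2_def by (simp add: algebra_simps)
      have m1: "0 \<le> measure lebesgue (ball (0::'a) (min r 1))" "measure lebesgue (ball (0::'a) (min r 1)) \<le> v"
        "measure lebesgue (ball (0::'a) (min r 1)) \<le> V1"
        unfolding v_def V1_def using V_mono[of "min r 1" r, where 'a='a] V_mono[of "min r 1" 1, where 'a='a] by auto
      have m2: "0 \<le> measure lebesgue (ball (0::'a) (min r R))" "measure lebesgue (ball (0::'a) (min r R)) \<le> v"
        "measure lebesgue (ball (0::'a) (min r R)) \<le> VR"
        unfolding v_def VR_def using V_mono[of "min r R" r, where 'a='a] V_mono[of "min r R" R, where 'a='a] by auto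
      have u1: "u1 \<le> (v/V1) powr (p/q)" "u1 \<le> (v/V1) powr (-(1 - p/q))"
        unfolding u1_def using bump[OF pp q v V1 m1] by auto
      have e: "v / VR = (v/V1) / T" using VR V1 by simp
      have u2: "u2 \<le> ((v/V1)/T) powr (p/q)" "u2 \<le> ((v/V1)/T) powr (-(1 - p/q))"
        unfolding u2_def e[symmetric] using bump[OF pp q v VRp m2] by auto
      have sum: "u1 + u2 \<le> 1 + T powr (-(p/q)/2) + T powr (-(1 - p/q)/2)"
        using absL[of "p/q" "1 - p/q" "v/V1" T u1 u2] u1 u2 pp q pq v V1 T1 by simp
      have u0: "0 \<le> u1 + u2" unfolding u1_def u2_def using m1 m2 by simp
      show ?thesis unfolding u K_def using sum u0 pp by (intro powr_mono2) auto
    qed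
    finally show ?thesis .
  qed
  show g: "g \<in> LM_set p q"
    unfolding LM_set_iff using gm gi vle by (auto simp: bdd_above_def)
  show "LM_norm p q g \<le> (1 + (R ^ DIM('a)) powr (-(p/q)/2) + (R ^ DIM('a)) powr (-(1 - p/q)/2)) powr (1/p)"
    using norm_le[OF vle] unfolding K_def T_def .
qed


lemma fa_val:
  assumes pp: "0 < p" and q: "0 < q"
  shows "val p q (fa q :: 'a::euclidean_space \<Rightarrow> real) 1 = 1"
proof -
  define V1 where "V1 = measure lebesgue (ball (0::'a) 1)"
  have V1: "0 < V1" unfolding V1_def by (rule V_pos) simp
  have pw: "\<bar>(fa q :: 'a \<Rightarrow> real) y\<bar> powr p = (V1 powr (-1/q)) powr p * indicator (ball (0::'a) 1) y" for y
    using pp by (auto simp: fa_def indicator_def V1_def)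
  have I: "(LINT y:ball 0 1|lebesgue. \<bar>(fa q :: 'a \<Rightarrow> real) y\<bar> powr p) = V1 powr (1 - p/q)"
  proof -
    have "(LINT y:ball 0 1|lebesgue. \<bar>(fa q :: 'a \<Rightarrow> real) y\<bar> powr p) = (V1 powr (-1/q)) powr p * V1"
      unfolding pw by (simp add: ind_integral V1_def)
    also have "\<dots> = V1 powr (-(p/q)) * V1 powr 1" using V1 by (simp add: powr_powr)
    also have "\<dots> = V1 powr (-(p/q) + 1)" by (simp only: powr_add[symmetric])
    finally show ?thesis by simp
  qed
  have "val p q (fa q :: 'a \<Rightarrow> real) 1 = V1 powr (1/q - 1/p) * (V1 powr (1 - p/q)) powr (1/p)"
    unfolding val_def I V1_def ..
  also have "\<dots> = V1 powr (1/q - 1/p) * V1 powr ((1 - p/q) * (1/p))" by (simp only: powr_powr)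
  also have "\<dots> = V1 powr ((1/q - 1/p) + (1 - p/q) * (1/p))" by (simp only: powr_add[symmetric])
  also have "(1/q - 1/p) + (1 - p/q) * (1/p) = 0" using pp q by (simp add: field_simps)
  finally show ?thesis using V1 by simp
qed

lemma fb_val:
  assumes pp: "0 < p" and q: "0 < q" and R: "1 < R"
  shows "val p q (fb q R :: 'a::euclidean_space \<Rightarrow> real) R = (1 - 1 / R ^ DIM('a)) powr (1/p)"
proof -
  define V1 where "V1 = measure lebesgue (ball (0::'a) 1)"
  define VR where "VR = measure lebesgue (ball (0::'a) R)"
  define T where "T = R ^ DIM('a)"
  have V1: "0 < V1" unfolding V1_def by (rule V_pos) simp
  have T1: "1 < T" unfolding T_def using R by (simp add: one_less_power)
  have VR: "VR = T * V1" unfolding VR_def V1_def T_def using V_scale[of R] R by simp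
  have VRp: "0 < VR" using VR T1 V1 by simp
  have sub: "y \<in> ball (0::'a) 1 \<Longrightarrow> y \<in> ball 0 R" for y using R by auto
  have pw: "\<bar>(fb q R :: 'a \<Rightarrow> real) y\<bar> powr p = (VR powr (-1/q)) powr p * indicator (ball (0::'a) R) y - (VR powr (-1/q)) powr p * indicator (ball (0::'a) 1) y" for y
    using pp sub[of y] by (auto simp: fb_def indicator_def VR_def)
  have I: "(LINT y:ball 0 R|lebesgue. \<bar>(fb q R :: 'a \<Rightarrow> real) y\<bar> powr p) = VR powr (-(p/q)) * (VR - V1)"
  proof -
    have "(LINT y:ball 0 R|lebesgue. \<bar>(fb q R :: 'a \<Rightarrow> real) y\<bar> powr p) = (VR powr (-1/q)) powr p * VR - (VR powr (-1/q)) powr p * V1"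
      unfolding pw using R
      by (simp add: set_integral_diff(2)[OF set_integrable_mult_right[OF ind_sint] set_integrable_mult_right[OF ind_sint]] ind_integral V1_def VR_def)
    then show ?thesis by (simp add: powr_powr right_diff_distrib)
  qed
  have "val p q (fb q R :: 'a \<Rightarrow> real) R = VR powr (1/q - 1/p) * (VR powr (-(p/q)) * (VR - V1)) powr (1/p)"
    unfolding val_def I VR_def ..
  also have "\<dots> = VR powr (1/q - 1/p) * ((VR powr (-(p/q))) powr (1/p) * (VR - V1) powr (1/p))"
    by (simp add: powr_mult)
  also have "\<dots> = (VR powr (1/q - 1/p) * VR powr (-(p/q) * (1/p))) * (VR - V1) powr (1/p)"
    by (simp add: powr_powr)
  also have "VR powr (1/q - 1/p) * VR powr (-(p/q) * (1/p)) = VR powr (-(1/p))"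
  proof -
    have "VR powr (1/q - 1/p) * VR powr (-(p/q) * (1/p)) = VR powr ((1/q - 1/p) + (-(p/q) * (1/p)))"
      by (simp only: powr_add[symmetric])
    also have "(1/q - 1/p) + (-(p/q) * (1/p)) = -(1/p)" using pp q by (simp add: field_simps)
    finally show ?thesis .
  qed
  also have "VR powr (-(1/p)) * (VR - V1) powr (1/p) = ((VR - V1) / VR) powr (1/p)"
    using VRp VR V1 T1 by (simp add: powr_divide powr_minus_divide)
  also have "(VR - V1) / VR = 1 - 1/T" using VR V1 T1 by (simp add: field_simps)
  finally show ?thesis unfolding T_def .
qed


definition comb :: "real \<Rightarrow> real \<Rightarrow> real \<Rightarrow> real \<Rightarrow> 'a::euclidean_space \<Rightarrow> real" where
  "comb q R c1 c2 = (\<lambda>y. c1 * fa q y + c2 * fb q R y)"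

definition KK :: "real \<Rightarrow> real \<Rightarrow> real \<Rightarrow> real" where
  "KK p q T = (1 + T powr (-(p/q)/2) + T powr (-(1 - p/q)/2)) powr (1/p)"

definition mm :: "real \<Rightarrow> real \<Rightarrow> real" where
  "mm p T = (1 - 1/T) powr (1/p)"

lemma comb_abs:
  assumes R: "1 < R"
  shows "\<bar>(comb q R c1 c2 :: 'a::euclidean_space \<Rightarrow> real) y\<bar> = \<bar>c1\<bar> * fa q y + \<bar>c2\<bar> * fb q R y"
proof -
  have a: "0 \<le> (fa q :: 'a \<Rightarrow> real) y" "0 \<le> (fb q R :: 'a \<Rightarrow> real) y" "(fa q :: 'a \<Rightarrow> real) y * fb q R y = 0"
    using fab_basic(1-3)[OF R, where 'a='a] by auto
  then have "(fa q :: 'a \<Rightarrow> real) y = 0 \<or> (fb q R :: 'a \<Rightarrow> real) y = 0" by simp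
  then show ?thesis
  proof
    assume "(fa q :: 'a \<Rightarrow> real) y = 0"
    then show ?thesis using a by (simp add: comb_def abs_mult)
  next
    assume "(fb q R :: 'a \<Rightarrow> real) y = 0"
    then show ?thesis using a by (simp add: comb_def abs_mult)
  qed
qed

lemma comb_meas: "1 < R \<Longrightarrow> (comb q R c1 c2 :: 'a::euclidean_space \<Rightarrow> real) \<in> borel_measurable lebesgue"
  using fab_basic(4,5) unfolding comb_def by measurable

lemma norm_abs_eq:
  assumes g: "g \<in> LM_set p q" and fm: "f \<in> borel_measurable lebesgue" and e: "\<And>y. \<bar>f y\<bar> = \<bar>g y\<bar>" and p: "0 < p"
  shows "f \<in> LM_set p q" "LM_norm p q f = LM_norm p q g"
proof -
  show f: "f \<in> LM_set p q" using LM_mono(1)[OF g fm _ p] e by simp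
  show "LM_norm p q f = LM_norm p q g"
    using LM_mono(3)[OF g fm _ p] LM_mono(3)[OF f _ _ p, of g] e g by (auto simp: LM_set_iff)
qed

lemma comb_props:
  fixes p q R :: real
  assumes p: "1 \<le> p" and pq: "p < q" and R: "1 < R"
  shows "(comb q R c1 c2 :: 'a::euclidean_space \<Rightarrow> real) \<in> LM_set p q"
    "LM_norm p q (comb q R c1 c2 :: 'a \<Rightarrow> real) \<le> max \<bar>c1\<bar> \<bar>c2\<bar> * KK p q (R ^ DIM('a))"
    "\<bar>c1\<bar> \<le> LM_norm p q (comb q R c1 c2 :: 'a \<Rightarrow> real)"
    "\<bar>c2\<bar> * mm p (R ^ DIM('a)) \<le> LM_norm p q (comb q R c1 c2 :: 'a \<Rightarrow> real)"
    "\<bar>c1\<bar> = c \<Longrightarrow> \<bar>c2\<bar> = c \<Longrightarrow> LM_norm p q (comb q R c1 c2 :: 'a \<Rightarrow> real) = c * LM_norm p q (comb q R 1 1 :: 'a \<Rightarrow> real)"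
    "1 \<le> LM_norm p q (comb q R 1 1 :: 'a \<Rightarrow> real)"
    "LM_norm p q (comb q R 1 1 :: 'a \<Rightarrow> real) \<le> KK p q (R ^ DIM('a))"
proof -
  have pp: "0 < p" and q: "0 < q" using p pq by auto
  have h1: "(comb q R 1 1 :: 'a \<Rightarrow> real) \<in> LM_set p q"
    "LM_norm p q (comb q R 1 1 :: 'a \<Rightarrow> real) \<le> KK p q (R ^ DIM('a))"
  proof -
    have gle: "\<bar>(comb q R 1 1 :: 'a \<Rightarrow> real) y\<bar> \<le> fa q y + fb q R y" for y
      using comb_abs[OF R, of q 1 1 y] by simp
    show "(comb q R 1 1 :: 'a \<Rightarrow> real) \<in> LM_set p q" by (rule h_LM(1)[OF p pq R comb_meas[OF R] gle])
    show "LM_norm p q (comb q R 1 1 :: 'a \<Rightarrow> real) \<le> KK p q (R ^ DIM('a))"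
      unfolding KK_def by (rule h_LM(2)[OF p pq R comb_meas[OF R] gle])
  qed
  show "LM_norm p q (comb q R 1 1 :: 'a \<Rightarrow> real) \<le> KK p q (R ^ DIM('a))" by (rule h1(2))
  define M where "M = max \<bar>c1\<bar> \<bar>c2\<bar>"
  have M: "0 \<le> M" by (simp add: M_def)
  have Mh: "(\<lambda>y. M * (comb q R 1 1 :: 'a \<Rightarrow> real) y) \<in> LM_set p q" "LM_norm p q (\<lambda>y. M * (comb q R 1 1 :: 'a \<Rightarrow> real) y) = M * LM_norm p q (comb q R 1 1 :: 'a \<Rightarrow> real)"
    using LM_scale[OF h1(1) pp, of M] M by auto
  have le: "\<bar>(comb q R c1 c2 :: 'a \<Rightarrow> real) y\<bar> \<le> \<bar>M * comb q R 1 1 y\<bar>" for y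
  proof -
    have "\<bar>(comb q R c1 c2 :: 'a \<Rightarrow> real) y\<bar> = \<bar>c1\<bar> * fa q y + \<bar>c2\<bar> * fb q R y" by (rule comb_abs[OF R])
    also have "\<dots> \<le> M * fa q y + M * fb q R y"
      using fab_basic(1-3)[OF R, of q y] by (intro add_mono mult_right_mono) (auto simp: M_def)
    also have "\<dots> = \<bar>M * comb q R 1 1 y\<bar>" using comb_abs[OF R, of q 1 1 y] M by (simp add: abs_mult algebra_simps)
    finally show ?thesis .
  qed
  show c: "(comb q R c1 c2 :: 'a \<Rightarrow> real) \<in> LM_set p q" using LM_mono(1)[OF Mh(1) comb_meas[OF R] le pp] .
  show "LM_norm p q (comb q R c1 c2 :: 'a \<Rightarrow> real) \<le> max \<bar>c1\<bar> \<bar>c2\<bar> * KK p q (R ^ DIM('a))"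
    unfolding M_def[symmetric]
  proof -
    have "LM_norm p q (comb q R c1 c2 :: 'a \<Rightarrow> real) \<le> LM_norm p q (\<lambda>y. M * (comb q R 1 1 :: 'a \<Rightarrow> real) y)"
      by (rule LM_mono(3)[OF Mh(1) comb_meas[OF R] le pp])
    also have "\<dots> = M * LM_norm p q (comb q R 1 1 :: 'a \<Rightarrow> real)" by (rule Mh(2))
    also have "\<dots> \<le> M * KK p q (R ^ DIM('a))" using h1(2) M by (rule mult_left_mono)
    finally show "LM_norm p q (comb q R c1 c2 :: 'a \<Rightarrow> real) \<le> M * KK p q (R ^ DIM('a))" .
  qed
  have lefa: "\<bar>(fa q :: 'a \<Rightarrow> real) y\<bar> \<le> \<bar>comb q R 1 1 y\<bar>" for y
    using comb_abs[OF R, of q 1 1 y] fab_basic(1,2)[OF R, of q y] by simp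
  have lefb: "\<bar>(fb q R :: 'a \<Rightarrow> real) y\<bar> \<le> \<bar>comb q R 1 1 y\<bar>" for y
    using comb_abs[OF R, of q 1 1 y] fab_basic(1,2)[OF R, of q y] by simp
  have faLM: "(fa q :: 'a \<Rightarrow> real) \<in> LM_set p q"
    by (rule LM_mono(1)[OF h1(1) fab_basic(4)[OF R] lefa pp])
  have fa1: "1 \<le> LM_norm p q (fa q :: 'a \<Rightarrow> real)"
    using val_le_norm[OF faLM, of 1] fa_val[OF pp q, where 'a='a] by simp
  have fbLM: "(fb q R :: 'a \<Rightarrow> real) \<in> LM_set p q"
    by (rule LM_mono(1)[OF h1(1) fab_basic(5)[OF R] lefb pp])
  have fbm: "mm p (R ^ DIM('a)) \<le> LM_norm p q (fb q R :: 'a \<Rightarrow> real)"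
    using val_le_norm[OF fbLM, of R] fb_val[OF pp q R, where 'a='a] R unfolding mm_def by simp
  have s1: "\<bar>c1 * (fa q :: 'a \<Rightarrow> real) y\<bar> \<le> \<bar>comb q R c1 c2 y\<bar>" for y
    using comb_abs[OF R, of q c1 c2 y] fab_basic(1-3)[OF R, of q y] by (simp add: abs_mult)
  have s2: "\<bar>c2 * (fb q R :: 'a \<Rightarrow> real) y\<bar> \<le> \<bar>comb q R c1 c2 y\<bar>" for y
    using comb_abs[OF R, of q c1 c2 y] fab_basic(1-3)[OF R, of q y] by (simp add: abs_mult)
  have m1: "(\<lambda>y. c1 * (fa q :: 'a \<Rightarrow> real) y) \<in> borel_measurable lebesgue" using fab_basic(4)[OF R] by measurable
  have m2: "(\<lambda>y. c2 * (fb q R :: 'a \<Rightarrow> real) y) \<in> borel_measurable lebesgue" using fab_basic(5)[OF R] by measurable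
  show "\<bar>c1\<bar> \<le> LM_norm p q (comb q R c1 c2 :: 'a \<Rightarrow> real)"
  proof -
    have "\<bar>c1\<bar> \<le> \<bar>c1\<bar> * LM_norm p q (fa q :: 'a \<Rightarrow> real)" using fa1 by (simp add: mult_le_cancel_left1)
    also have "\<dots> = LM_norm p q (\<lambda>y. c1 * (fa q :: 'a \<Rightarrow> real) y)" using LM_scale(3)[OF faLM pp] by simp
    also have "\<dots> \<le> LM_norm p q (comb q R c1 c2 :: 'a \<Rightarrow> real)" by (rule LM_mono(3)[OF c m1 s1 pp])
    finally show ?thesis .
  qed
  show "\<bar>c2\<bar> * mm p (R ^ DIM('a)) \<le> LM_norm p q (comb q R c1 c2 :: 'a \<Rightarrow> real)"
  proof -
    have "\<bar>c2\<bar> * mm p (R ^ DIM('a)) \<le> \<bar>c2\<bar> * LM_norm p q (fb q R :: 'a \<Rightarrow> real)" using fbm by (simp add: mult_left_mono)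
    also have "\<dots> = LM_norm p q (\<lambda>y. c2 * (fb q R :: 'a \<Rightarrow> real) y)" using LM_scale(3)[OF fbLM pp] by simp
    also have "\<dots> \<le> LM_norm p q (comb q R c1 c2 :: 'a \<Rightarrow> real)" by (rule LM_mono(3)[OF c m2 s2 pp])
    finally show ?thesis .
  qed
  show "1 \<le> LM_norm p q (comb q R 1 1 :: 'a \<Rightarrow> real)"
  proof -
    have "1 \<le> LM_norm p q (fa q :: 'a \<Rightarrow> real)" by (rule fa1)
    also have "\<dots> \<le> LM_norm p q (comb q R 1 1 :: 'a \<Rightarrow> real)"
      by (rule LM_mono(3)[OF h1(1) fab_basic(4)[OF R] lefa pp])
    finally show ?thesis .
  qed
  show "LM_norm p q (comb q R c1 c2 :: 'a \<Rightarrow> real) = c * LM_norm p q (comb q R 1 1 :: 'a \<Rightarrow> real)"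
    if "\<bar>c1\<bar> = c" "\<bar>c2\<bar> = c"
  proof -
    have c0: "0 \<le> c" using that by auto
    have e: "\<bar>(comb q R c1 c2 :: 'a \<Rightarrow> real) y\<bar> = \<bar>c * comb q R 1 1 y\<bar>" for y
      using comb_abs[OF R, of q c1 c2 y] comb_abs[OF R, of q 1 1 y] that c0 by (simp add: abs_mult algebra_simps)
    have "LM_norm p q (comb q R c1 c2 :: 'a \<Rightarrow> real) = LM_norm p q (\<lambda>y. c * (comb q R 1 1 :: 'a \<Rightarrow> real) y)"
      by (rule norm_abs_eq(2)[OF LM_scale(1)[OF h1(1) pp] comb_meas[OF R] e pp])
    also have "\<dots> = c * LM_norm p q (comb q R 1 1 :: 'a \<Rightarrow> real)" using LM_scale(3)[OF h1(1) pp] c0 by simp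
    finally show ?thesis .
  qed
qed


lemma T_lim: "0 < n \<Longrightarrow> filterlim (\<lambda>R::real. R ^ n) at_top at_top"
  by (intro filterlim_pow_at_top filterlim_ident)

lemma KK_lim:
  assumes pp: "0 < p" and pq: "p < q" and n: "0 < n"
  shows "((\<lambda>R. KK p q (R ^ n)) \<longlongrightarrow> 1) at_top"
proof -
  have q: "0 < q" using pp pq by simp
  have a: "((\<lambda>R. (R ^ n) powr (-(p/q)/2)) \<longlongrightarrow> 0) at_top"
    using pp q by (intro tendsto_neg_powr T_lim n) simp
  have b: "((\<lambda>R. (R ^ n) powr (-(1 - p/q)/2)) \<longlongrightarrow> 0) at_top"
    using pp pq q by (intro tendsto_neg_powr T_lim n) (simp add: field_simps)
  have "((\<lambda>R. (1 + (R ^ n) powr (-(p/q)/2) + (R ^ n) powr (-(1 - p/q)/2)) powr (1/p)) \<longlongrightarrow> (1 + 0 + 0) powr (1/p)) at_top"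
    by (intro tendsto_powr tendsto_add tendsto_const a b) simp
  then show ?thesis unfolding KK_def by simp
qed

lemma mm_lim:
  assumes pp: "0 < p" and n: "0 < n"
  shows "((\<lambda>R. mm p (R ^ n)) \<longlongrightarrow> 1) at_top"
proof -
  have a: "((\<lambda>R::real. 1 / (R ^ n)) \<longlongrightarrow> 0) at_top"
  proof -
    have "((\<lambda>R. inverse (R ^ n)) \<longlongrightarrow> (0::real)) at_top" by (rule tendsto_inverse_0_at_top[OF T_lim[OF n]])
    then show ?thesis by (simp add: inverse_eq_divide)
  qed
  have "((\<lambda>R. (1 - 1 / (R ^ n)) powr (1/p)) \<longlongrightarrow> (1 - 0) powr (1/p)) at_top"
    by (intro tendsto_powr tendsto_diff tendsto_const a) simp
  then show ?thesis unfolding mm_def by simp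
qed

lemma lim_le:
  fixes G :: "real \<Rightarrow> real" and C :: ereal
  assumes G: "(G \<longlongrightarrow> L) at_top" and le: "\<And>R. 1 < R \<Longrightarrow> ereal (G R) \<le> C"
  shows "ereal L \<le> C"
proof (rule tendsto_upperbound)
  show "((\<lambda>R. ereal (G R)) \<longlongrightarrow> ereal L) at_top" using G by (rule tendsto_ereal)
  show "\<forall>\<^sub>F i in at_top. ereal (G i) \<le> C" using eventually_gt_at_top[of 1] by eventually_elim (rule le)
qed simp

lemma mm_pos: "1 < T \<Longrightarrow> 0 < mm p T"
  unfolding mm_def by simp

lemma NJ_arith:
  fixes H K s d m :: real
  assumes "0 < H" "H \<le> K" "2 \<le> s" "2 * m \<le> d" "0 \<le> m"
  shows "(1 + m^2) / K^2 \<le> (s^2 + d^2) / (2 * (H^2 + H^2))"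
proof -
  have "(1 + m^2) / K^2 \<le> (1 + m^2) / H^2"
    using assms by (intro divide_left_mono power_mono mult_pos_pos) (auto intro: add_nonneg_nonneg)
  also have "(1 + m^2) / H^2 = (4 + (2*m)^2) / (2 * (H^2 + H^2))"
    using assms by (simp add: field_simps power2_eq_square)
  also have "\<dots> \<le> (s^2 + d^2) / (2 * (H^2 + H^2))"
  proof -
    have "(2::real)^2 \<le> s^2" using assms by (intro power_mono) auto
    moreover have "(2*m)^2 \<le> d^2" using assms by (intro power_mono) auto
    ultimately show ?thesis using assms by (intro divide_right_mono) auto
  qed
  finally show ?thesis .
qed


lemma comb_add: "(\<lambda>t. (comb q R a1 a2 :: 'a::euclidean_space \<Rightarrow> real) t + comb q R b1 b2 t) = comb q R (a1 + b1) (a2 + b2)"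
  by (auto simp: comb_def algebra_simps)
lemma comb_diff: "(\<lambda>t. (comb q R a1 a2 :: 'a::euclidean_space \<Rightarrow> real) t - comb q R b1 b2 t) = comb q R (a1 - b1) (a2 - b2)"
  by (auto simp: comb_def algebra_simps)
lemma comb_sdiff: "(\<lambda>t. (comb q R a1 a2 :: 'a::euclidean_space \<Rightarrow> real) t / A - comb q R b1 b2 t / B) = comb q R (a1/A - b1/B) (a2/A - b2/B)"
  by (auto simp: comb_def algebra_simps diff_divide_distrib add_divide_distrib)

lemma NJ_lower:
  fixes p q :: real
  assumes p: "1 \<le> p" and pq: "p < q"
  shows "2 \<le> C_NJ (LM_set p q :: ('a::euclidean_space \<Rightarrow> real) set) (LM_norm p q)"
proof -
  have pp: "0 < p" using p by simp
  have n: "0 < DIM('a)" by simp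
  let ?G = "\<lambda>R. (1 + (mm p (R ^ DIM('a)))^2) / (KK p q (R ^ DIM('a)))^2"
  have lim: "(?G \<longlongrightarrow> (1 + 1^2) / 1^2) at_top"
    by (intro tendsto_intros mm_lim KK_lim pp pq n) simp
  have "ereal ((1 + 1^2) / 1^2) \<le> C_NJ (LM_set p q :: ('a::euclidean_space \<Rightarrow> real) set) (LM_norm p q)"
  proof (rule lim_le[OF lim])
    fix R :: real assume R: "1 < R"
    define x where "x = (comb q R 1 1 :: 'a \<Rightarrow> real)"
    define y where "y = (comb q R 1 (-1) :: 'a \<Rightarrow> real)"
    define H where "H = LM_norm p q (comb q R 1 1 :: 'a \<Rightarrow> real)"
    note cp = comb_props[OF p pq R, where 'a='a]
    have H1: "1 \<le> H" unfolding H_def by (rule cp(6))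
    have HK: "H \<le> KK p q (R ^ DIM('a))" unfolding H_def by (rule cp(7))
    have Nx: "LM_norm p q x = H" unfolding x_def H_def ..
    have Ny: "LM_norm p q y = H" unfolding y_def H_def using cp(5)[of 1 1 "-1"] by simp
    have mem: "(x, y) \<in> {(x, y). x \<in> (LM_set p q :: ('a \<Rightarrow> real) set) \<and> y \<in> LM_set p q \<and> LM_norm p q x \<noteq> 0 \<and> LM_norm p q y \<noteq> 0}"
      using cp(1) Nx Ny H1 unfolding x_def y_def by auto
    have s: "2 \<le> LM_norm p q (\<lambda>t. x t + y t)"
    proof -
      have "\<bar>2\<bar> \<le> LM_norm p q (comb q R 2 0 :: 'a \<Rightarrow> real)" by (rule cp(3))
      then show ?thesis unfolding x_def y_def comb_add by simp
    qed
    have d: "2 * mm p (R ^ DIM('a)) \<le> LM_norm p q (\<lambda>t. x t - y t)"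
    proof -
      have "\<bar>2\<bar> * mm p (R ^ DIM('a)) \<le> LM_norm p q (comb q R 0 2 :: 'a \<Rightarrow> real)" by (rule cp(4))
      then show ?thesis unfolding x_def y_def comb_diff by simp
    qed
    have m0: "0 \<le> mm p (R ^ DIM('a))" unfolding mm_def by simp
    have "?G R \<le> ((LM_norm p q (\<lambda>t. x t + y t))^2 + (LM_norm p q (\<lambda>t. x t - y t))^2) / (2 * ((LM_norm p q x)^2 + (LM_norm p q y)^2))"
      unfolding Nx Ny using NJ_arith[OF _ HK s d m0] H1 by simp
    then have "ereal (?G R) \<le> ereal (((LM_norm p q (\<lambda>t. x t + y t))^2 + (LM_norm p q (\<lambda>t. x t - y t))^2) / (2 * ((LM_norm p q x)^2 + (LM_norm p q y)^2)))"
      by simp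
    also have "\<dots> \<le> C_NJ (LM_set p q :: ('a::euclidean_space \<Rightarrow> real) set) (LM_norm p q)"
      unfolding C_NJ_def by (rule SUP_upper2[OF mem]) simp
    finally show "ereal (?G R) \<le> C_NJ (LM_set p q :: ('a::euclidean_space \<Rightarrow> real) set) (LM_norm p q)" .
  qed
  then show ?thesis by simp
qed

lemma J_lower:
  fixes p q :: real
  assumes p: "1 \<le> p" and pq: "p < q"
  shows "2 \<le> C_J (LM_set p q :: ('a::euclidean_space \<Rightarrow> real) set) (LM_norm p q)"
proof -
  have pp: "0 < p" using p by simp
  have n: "0 < DIM('a)" by simp
  let ?G = "\<lambda>R. min (2 / KK p q (R ^ DIM('a))) (2 * mm p (R ^ DIM('a)) / KK p q (R ^ DIM('a)))"
  have lim: "(?G \<longlongrightarrow> min (2 / 1) (2 * 1 / 1)) at_top"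
    by (intro tendsto_intros mm_lim KK_lim pp pq n) simp_all
  have "ereal (min (2 / 1) (2 * 1 / 1)) \<le> C_J (LM_set p q :: ('a::euclidean_space \<Rightarrow> real) set) (LM_norm p q)"
  proof (rule lim_le[OF lim])
    fix R :: real assume R: "1 < R"
    define H where "H = LM_norm p q (comb q R 1 1 :: 'a \<Rightarrow> real)"
    define x where "x = (comb q R (1/H) (1/H) :: 'a \<Rightarrow> real)"
    define y where "y = (comb q R (1/H) (-1/H) :: 'a \<Rightarrow> real)"
    note cp = comb_props[OF p pq R, where 'a='a]
    have H1: "1 \<le> H" unfolding H_def by (rule cp(6))
    have HK: "H \<le> KK p q (R ^ DIM('a))" unfolding H_def by (rule cp(7))
    have Nx: "LM_norm p q x = 1" unfolding x_def using cp(5)[of "1/H" "1/H" "1/H"] H1 by (simp add: H_def)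
    have Ny: "LM_norm p q y = 1" unfolding y_def using cp(5)[of "1/H" "1/H" "-1/H"] H1 by (simp add: H_def)
    have mem: "(x, y) \<in> {(x, y). x \<in> (LM_set p q :: ('a \<Rightarrow> real) set) \<and> y \<in> LM_set p q \<and> LM_norm p q x = 1 \<and> LM_norm p q y = 1}"
      using cp(1) Nx Ny unfolding x_def y_def by auto
    have s: "2 / H \<le> LM_norm p q (\<lambda>t. x t + y t)"
    proof -
      have "\<bar>1/H + 1/H\<bar> \<le> LM_norm p q (comb q R (1/H + 1/H) (1/H + -1/H) :: 'a \<Rightarrow> real)" by (rule cp(3))
      then show ?thesis unfolding x_def y_def comb_add using H1 by simp
    qed
    have d: "2 / H * mm p (R ^ DIM('a)) \<le> LM_norm p q (\<lambda>t. x t - y t)"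
    proof -
      have "\<bar>1/H - -1/H\<bar> * mm p (R ^ DIM('a)) \<le> LM_norm p q (comb q R (1/H - 1/H) (1/H - -1/H) :: 'a \<Rightarrow> real)" by (rule cp(4))
      then show ?thesis unfolding x_def y_def comb_diff using H1 by simp
    qed
    have m0: "0 \<le> mm p (R ^ DIM('a))" unfolding mm_def by simp
    have "2 / KK p q (R ^ DIM('a)) \<le> 2 / H" using H1 HK by (intro divide_left_mono) auto
    moreover have "2 * mm p (R ^ DIM('a)) / KK p q (R ^ DIM('a)) \<le> 2 / H * mm p (R ^ DIM('a))"
      using H1 HK m0 by (simp add: divide_simps mult_left_mono)
    ultimately have "?G R \<le> min (LM_norm p q (\<lambda>t. x t + y t)) (LM_norm p q (\<lambda>t. x t - y t))"
      using s d by linarith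
    then have "ereal (?G R) \<le> ereal (min (LM_norm p q (\<lambda>t. x t + y t)) (LM_norm p q (\<lambda>t. x t - y t)))"
      by (simp only: ereal_less_eq(3))
    also have "\<dots> \<le> C_J (LM_set p q :: ('a::euclidean_space \<Rightarrow> real) set) (LM_norm p q)"
      unfolding C_J_def by (rule SUP_upper2[OF mem]) simp
    finally show "ereal (?G R) \<le> C_J (LM_set p q :: ('a::euclidean_space \<Rightarrow> real) set) (LM_norm p q)" .
  qed
  then show ?thesis by simp
qed


lemma DW_arith:
  fixes a H K m e W c1 :: real
  assumes m: "0 < m" "m \<le> a" and H: "1 \<le> H" "H \<le> K" and e: "0 < e" "e < 1"
    and W: "\<bar>c1\<bar> \<le> W" and c1: "c1 = (e - 1)/a + 1/H"
  shows "(m + (1 - e/2)) / ((e/2) * K) * (1/K - (1 - e)/m) \<le> (a + (1 - e/2) * H) / ((e/2) * H) * W"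
proof -
  define P where "P = (m + (1 - e/2)) / ((e/2) * K)"
  define Q where "Q = (a + (1 - e/2) * H) / ((e/2) * H)"
  define L where "L = 1/K - (1 - e)/m"
  have a: "0 < a" using m by simp
  have P0: "0 \<le> P" unfolding P_def using m H e by (intro divide_nonneg_pos) auto
  have PQ: "P \<le> Q" unfolding P_def Q_def
  proof (rule frac_le)
    show "0 \<le> a + (1 - e/2) * H" using a H e by (intro add_nonneg_nonneg mult_nonneg_nonneg) auto
    have "1 - e/2 \<le> (1 - e/2) * H" using H e by (simp add: mult_le_cancel_left1)
    then show "m + (1 - e/2) \<le> a + (1 - e/2) * H" using m by linarith
    show "0 < (e/2) * H" using e H by simp
    show "(e/2) * H \<le> (e/2) * K" using e H by simp
  qed
  have W0: "0 \<le> W" using W by linarith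
  have Q0: "0 \<le> Q" using P0 PQ by linarith
  have Lc: "L \<le> c1"
  proof -
    have "1/K \<le> 1/H" using H by (intro divide_left_mono) auto
    moreover have "(1 - e)/a \<le> (1 - e)/m" using m e by (intro divide_left_mono) auto
    ultimately show ?thesis unfolding L_def c1 by (simp add: diff_divide_distrib)
  qed
  show ?thesis
  proof (cases "L \<le> 0")
    case True
    then have "P * L \<le> 0" using P0 by (simp add: mult_nonneg_nonpos)
    also have "0 \<le> Q * W" using Q0 W0 by simp
    finally show ?thesis unfolding P_def Q_def L_def .
  next
    case False
    have "P * L \<le> Q * L" using PQ False by (intro mult_right_mono) auto
    also have "\<dots> \<le> Q * W" using Lc W Q0 by (intro mult_left_mono) auto
    finally show ?thesis unfolding P_def Q_def L_def .
  qed
qed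

lemma DW_lower_e:
  fixes p q e :: real
  assumes p: "1 \<le> p" and pq: "p < q" and e: "0 < e" "e < 1"
  shows "ereal (4 - e) \<le> C_DW (LM_set p q :: ('a::euclidean_space \<Rightarrow> real) set) (LM_norm p q)"
proof -
  have pp: "0 < p" using p by simp
  have n: "0 < DIM('a)" by simp
  let ?G = "\<lambda>R. (mm p (R ^ DIM('a)) + (1 - e/2)) / ((e/2) * KK p q (R ^ DIM('a))) * (1 / KK p q (R ^ DIM('a)) - (1 - e) / mm p (R ^ DIM('a)))"
  have lim: "(?G \<longlongrightarrow> (1 + (1 - e/2)) / ((e/2) * 1) * (1/1 - (1 - e)/1)) at_top"
    using e by (intro tendsto_intros mm_lim KK_lim pp pq n) simp_all
  have val: "(1 + (1 - e/2)) / ((e/2) * 1) * (1/1 - (1 - e)/1) = 4 - e"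
    using e by (simp add: field_simps)
  show ?thesis unfolding val[symmetric]
  proof (rule lim_le[OF lim])
    fix R :: real assume R: "1 < R"
    note cp = comb_props[OF p pq R, where 'a='a]
    define H where "H = LM_norm p q (comb q R 1 1 :: 'a \<Rightarrow> real)"
    define x where "x = (comb q R (e - 1) 1 :: 'a \<Rightarrow> real)"
    define y where "y = (comb q R (-(1 - e/2)) (1 - e/2) :: 'a \<Rightarrow> real)"
    define m where "m = mm p (R ^ DIM('a))"
    define K where "K = KK p q (R ^ DIM('a))"
    have H1: "1 \<le> H" unfolding H_def by (rule cp(6))
    have HK: "H \<le> K" unfolding H_def K_def by (rule cp(7))
    have m0: "0 < m" unfolding m_def using R by (intro mm_pos) (simp add: one_less_power)
    have Nx: "m \<le> LM_norm p q x"
    proof -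
      have "\<bar>1\<bar> * mm p (R ^ DIM('a)) \<le> LM_norm p q (comb q R (e - 1) 1 :: 'a \<Rightarrow> real)" by (rule cp(4))
      then show ?thesis unfolding x_def m_def by simp
    qed
    have Ny: "LM_norm p q y = (1 - e/2) * H"
      unfolding y_def H_def by (rule cp(5)) (use e in auto)
    have Nd: "LM_norm p q (\<lambda>t. x t - y t) = (e/2) * H"
      unfolding x_def y_def comb_diff H_def by (rule cp(5)) (use e in auto)
    define a where "a = LM_norm p q x"
    define c1 where "c1 = (e - 1)/a - (-(1 - e/2)) / ((1 - e/2) * H)"
    have a0: "0 < a" using Nx m0 unfolding a_def by linarith
    have W: "\<bar>c1\<bar> \<le> LM_norm p q (\<lambda>t. x t / LM_norm p q x - y t / LM_norm p q y)"
      unfolding Ny a_def[symmetric] unfolding x_def y_def comb_sdiff c1_def by (rule cp(3))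
    have c1e: "c1 = (e - 1)/a + 1/H"
    proof -
      have nz: "1 - e/2 \<noteq> 0" "H \<noteq> 0" using e H1 by auto
      have k: "(-(1 - e/2)) / ((1 - e/2) * H) = -(1/H)" using nz by (simp add: field_simps)
      show ?thesis unfolding c1_def k by simp
    qed
    have mem: "(x, y) \<in> {(x, y). x \<in> (LM_set p q :: ('a \<Rightarrow> real) set) \<and> y \<in> LM_set p q \<and> LM_norm p q x \<noteq> 0 \<and> LM_norm p q y \<noteq> 0
                                \<and> LM_norm p q (\<lambda>t. x t - y t) \<noteq> 0}"
      using cp(1) a0 Ny Nd H1 e unfolding x_def y_def a_def by auto
    have "?G R \<le> (a + (1 - e/2) * H) / ((e/2) * H) * LM_norm p q (\<lambda>t. x t / LM_norm p q x - y t / LM_norm p q y)"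
      using DW_arith[OF m0 Nx[folded a_def] H1 HK e W c1e] unfolding m_def K_def .
    also have "\<dots> = (LM_norm p q x + LM_norm p q y) / LM_norm p q (\<lambda>t. x t - y t) * LM_norm p q (\<lambda>t. x t / LM_norm p q x - y t / LM_norm p q y)"
      unfolding Ny Nd a_def ..
    finally have "ereal (?G R) \<le> ereal ((LM_norm p q x + LM_norm p q y) / LM_norm p q (\<lambda>t. x t - y t) * LM_norm p q (\<lambda>t. x t / LM_norm p q x - y t / LM_norm p q y))"
      by (simp only: ereal_less_eq(3))
    also have "\<dots> \<le> C_DW (LM_set p q :: ('a::euclidean_space \<Rightarrow> real) set) (LM_norm p q)"
      unfolding C_DW_def by (rule SUP_upper2[OF mem]) simp
    finally show "ereal (?G R) \<le> C_DW (LM_set p q :: ('a::euclidean_space \<Rightarrow> real) set) (LM_norm p q)" .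
  qed
qed

lemma DW_lower:
  fixes p q :: real
  assumes p: "1 \<le> p" and pq: "p < q"
  shows "4 \<le> C_DW (LM_set p q :: ('a::euclidean_space \<Rightarrow> real) set) (LM_norm p q)"
proof -
  have "ereal 4 \<le> C_DW (LM_set p q :: ('a::euclidean_space \<Rightarrow> real) set) (LM_norm p q)"
  proof (rule tendsto_upperbound)
    show "((\<lambda>e. ereal (4 - e)) \<longlongrightarrow> ereal 4) (at_right 0)"
      by (intro tendsto_intros) (auto intro: tendsto_eq_intros)
    show "\<forall>\<^sub>F e in at_right 0. ereal (4 - e) \<le> C_DW (LM_set p q :: ('a::euclidean_space \<Rightarrow> real) set) (LM_norm p q)"
    proof -
      have "\<forall>\<^sub>F e in at_right (0::real). e < 1" by (rule eventually_at_rightI[of 0 1]) auto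
      moreover have "\<forall>\<^sub>F e in at_right (0::real). 0 < e" by (rule eventually_at_right_less)
      ultimately show ?thesis by eventually_elim (rule DW_lower_e[OF p pq])
    qed
  qed simp
  then show ?thesis by simp
qed


theorem mainTheorem3:
  fixes p q :: real
  assumes "1 \<le> p" and "p < q"
  shows "C_NJ (LM_set p q :: ('a::euclidean_space \<Rightarrow> real) set) (LM_norm p q) = 2
       \<and> C_J (LM_set p q :: ('a::euclidean_space \<Rightarrow> real) set) (LM_norm p q) = 2
       \<and> C_DW (LM_set p q :: ('a::euclidean_space \<Rightarrow> real) set) (LM_norm p q) = 4"
proof (intro conjI)
  show "C_NJ (LM_set p q :: ('a::euclidean_space \<Rightarrow> real) set) (LM_norm p q) = 2"
    by (rule antisym[OF NJ_upper[OF assms(1)] NJ_lower[OF assms]])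
  show "C_J (LM_set p q :: ('a::euclidean_space \<Rightarrow> real) set) (LM_norm p q) = 2"
    by (rule antisym[OF J_upper[OF assms(1)] J_lower[OF assms]])
  show "C_DW (LM_set p q :: ('a::euclidean_space \<Rightarrow> real) set) (LM_norm p q) = 4"
    by (rule antisym[OF DW_upper[OF assms(1)] DW_lower[OF assms]])
qed

end
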